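(* For every integer $n\ge 1$, \[ \sum_{k=0}^{n}\Big(-\frac{1}{4}\Big)^k\binom{n}{k}\binom{1+2k}{k}\,k\,H_{1+2k} =\frac{3n}{2^{1+2n}(1-4n^2)}\binom{1+2n}{n}\Big\{3H_n-4H_{1+2n}-\frac{16n}{1-4n^2}-\frac{2-14n}{3n}\Big\}+\frac{1}{1+n}. \]
   Context: For an integer $m\ge 0$, $H_m$ denotes the $m$-th harmonic number: $H_0=0$ and $H_m=\sum_{j=1}^m \frac1j$ for $m\ge1$. $\binom{n}{k}$ is the usual binomial coefficient. *)

theory Defs
  imports "HOL-Analysis.Analysis"
begin

end

theory Submission
  imports Defs
begin

declare binomial_Suc_Suc[simp del]

lemma bin1: "real (m choose j) * (real m + 1) = real (Suc m choose j) * (real m + 1 - real j)"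
proof (cases "j \<le> Suc m")
  case True
  have "(Suc m - j) * (Suc m choose j) = Suc m * (m choose j)"
    using binomial_absorb_comp[of "Suc m" j] by simp
  hence "real (Suc m - j) * real (Suc m choose j) = real (Suc m) * real (m choose j)"
    by (metis of_nat_mult)
  thus ?thesis using True by (simp add: of_nat_diff algebra_simps)
next
  case False thus ?thesis by (simp add: binomial_eq_0)
qed

lemma bin2: "real (m choose j) * (real m + 1) = real (Suc m choose Suc j) * (real j + 1)"
proof -
  have "Suc m * (m choose j) = (Suc m choose Suc j) * Suc j" by (rule Suc_times_binomial_eq)
  hence "real (Suc m * (m choose j)) = real ((Suc m choose Suc j) * Suc j)" by simp
  thus ?thesis by (simp add: algebra_simps)
qed

lemma cb: "real (Suc (2*k) choose k) * (real k + 1) = (2*real k+1) * real (2*k choose k)"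
proof -
  have a: "real ((2*k) choose k) * (real (2*k) + 1) = real (Suc (2*k) choose Suc k) * (real k + 1)"
    by (rule bin2)
  have b: "Suc (2*k) choose Suc k = Suc (2*k) choose k"
    using binomial_symmetric[of "Suc k" "Suc (2*k)"] by simp
  show ?thesis using a unfolding b by (simp add: algebra_simps)
qed

lemma cb2: "real ((2*k+2) choose (k+1)) = 2 * real (Suc (2*k) choose k)"
proof -
  have "(2*k+2) choose (k+1) = (Suc (2*k) choose k) + (Suc (2*k) choose Suc k)"
    using binomial_Suc_Suc[of "Suc (2*k)" k] by simp
  moreover have "Suc (2*k) choose Suc k = Suc (2*k) choose k"
    using binomial_symmetric[of "Suc k" "Suc (2*k)"] by simp
  ultimately show ?thesis by simp
qed

lemma cb3: "real ((2*k+2) choose (k+1)) * (real k + 1) = 2*(2*real k + 1) * real (2*k choose k)"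
  using cb[of k] cb2[of k] by (simp add: algebra_simps)

lemma cb4: "real ((2*k+3) choose (k+1)) * (real k + 2) = 2*(2*real k + 3) * real (Suc (2*k) choose k)"
proof -
  have a: "real (Suc (2*(k+1)) choose (k+1)) * (real (k+1) + 1) = (2*real (k+1)+1) * real (2*(k+1) choose (k+1))"
    by (rule cb)
  have b: "Suc (2*(k+1)) = 2*k+3" "2*(k+1) = 2*k+2" by simp_all
  have d: "Suc (2*k+2) = 2*k+3" by simp
  have c: "real (k+1) + 1 = real k + 2" "2*real (k+1)+1 = 2*real k + 3" by simp_all
  have a2: "real ((2*k+3) choose (k+1)) * (real k + 2) = (2*real k + 3) * real ((2*k+2) choose (k+1))"
    using a unfolding b c d .
  show ?thesis unfolding a2 cb2 by simp
qed

definition Am :: "nat \<Rightarrow> nat \<Rightarrow> real" where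
  "Am m j = (-1/4)^j * real (m choose j) * real (2*j choose j) * (real j - 1) * (4*real j + 1)"

definition Qp :: "real \<Rightarrow> real \<Rightarrow> real" where
  "Qp m j = (-4-84*m-72*m^2)+(20+214*m+132*m^2)*j+(-16-88*m-48*m^2)*j^2"

definition GA :: "nat \<Rightarrow> nat \<Rightarrow> real" where
  "GA m j = (-1/4)^j * (real j * real (m choose (j - 1))) * real (2*j choose j) * Qp (real m) (real j)"

lemma certA_alg:
  fixes m j t b c :: real
  assumes "m + 1 \<noteq> 0" "j + 1 \<noteq> 0"
  shows "(2*m+2)*(6*m^2-m-3)*(t*b*c*(j - 1)*(4*j+1)) - (6*m^2+11*m+2)*(2*m-3)*(t*(b*(m+1-j)/(m+1))*c*(j - 1)*(4*j+1))
    = t*(-1/4)*((j+1)*(b*(m+1-j)/(m+1)))*(2*(2*j+1)*c/(j+1))*Qp m (j+1) - t*(j*j*b/(m+1))*c*Qp m j"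
proof -
  define M where "M = m + 1"
  define J where "J = j + 1"
  have m: "m = M - 1" and j: "j = J - 1" unfolding M_def J_def by simp_all
  have "M \<noteq> 0" "J \<noteq> 0" using assms unfolding M_def J_def by simp_all
  thus ?thesis unfolding m j Qp_def by (simp add: field_simps) (simp add: algebra_simps power2_eq_square)
qed

lemma certA:
  "(2*real m+2)*(6*(real m)^2-real m-3) * Am (Suc m) j - (6*(real m)^2+11*real m+2)*(2*real m-3) * Am m j
    = GA m (Suc j) - GA m j"
proof -
  define b where "b = real (Suc m choose j)"
  define c where "c = real (2*j choose j)"
  define t :: real where "t = (-1/4)^j"
  have mp: "real m + 1 > 0" by simp
  have jp: "real j + 1 > 0" "1 + real j > 0" by simp_all
  have e1: "real (m choose j) = b*(real m+1-real j)/(real m+1)"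
    using bin1[of m j] mp unfolding b_def by (simp add: field_simps)
  have e2: "real (2*Suc j choose Suc j) = 2*(2*real j+1)*c/(real j+1)"
  proof -
    have "2*Suc j = 2*j+2" by simp
    thus ?thesis using cb3[of j] unfolding c_def by (simp add: field_simps)
  qed
  have e3: "real j * real (m choose (j - 1)) = real j * real j * b/(real m+1)"
  proof (cases j)
    case 0 thus ?thesis by simp
  next
    case (Suc i)
    thus ?thesis using bin2[of m i] mp unfolding b_def by (simp add: field_simps)
  qed
  have A1: "Am (Suc m) j = t*b*c*(real j - 1)*(4*real j+1)"
    unfolding Am_def t_def b_def c_def by simp
  have A0: "Am m j = t*(b*(real m+1-real j)/(real m+1))*c*(real j - 1)*(4*real j+1)"
    unfolding Am_def t_def c_def e1 by simp
  have G1: "GA m (Suc j) = t*(-1/4)*((real j + 1)*(b*(real m+1-real j)/(real m+1)))*(2*(2*real j+1)*c/(real j+1))*Qp (real m) (real j+1)"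
  proof -
    have sj: "Suc j - 1 = j" by simp
    show ?thesis unfolding GA_def t_def sj e1 e2 of_nat_Suc by (simp add: ac_simps)
  qed
  have G0: "GA m j = t*(real j * real j * b/(real m+1))*c*Qp (real m) (real j)"
    unfolding GA_def t_def c_def e3 by simp
  show ?thesis unfolding A1 A0 G1 G0 by (rule certA_alg) simp_all
qed

definition U :: "nat \<Rightarrow> real" where "U m = (\<Sum>j=0..m. Am m j)"

lemma U_rec:
  "(2*real m+2)*(6*(real m)^2-real m-3) * U (Suc m) - (6*(real m)^2+11*real m+2)*(2*real m-3) * U m = 0"
proof -
  have s0: "(\<Sum>j=0..Suc m. Am m j) = U m"
    unfolding U_def by (simp add: Am_def)
  have "(\<Sum>j=0..Suc m. (2*real m+2)*(6*(real m)^2-real m-3) * Am (Suc m) j - (6*(real m)^2+11*real m+2)*(2*real m-3) * Am m j)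
      = (\<Sum>j=0..Suc m. GA m (Suc j) - GA m j)"
    by (rule sum.cong) (simp_all add: certA)
  also have "\<dots> = GA m (Suc (Suc m)) - GA m 0" by (rule sum_Suc_diff) simp
  also have "\<dots> = 0" by (simp add: GA_def)
  finally have "(2*real m+2)*(6*(real m)^2-real m-3) * (\<Sum>j=0..Suc m. Am (Suc m) j) - (6*(real m)^2+11*real m+2)*(2*real m-3) * (\<Sum>j=0..Suc m. Am m j) = 0"
    by (simp only: sum_subtractf sum_distrib_left)
  thus ?thesis unfolding s0 U_def[of "Suc m", symmetric] .
qed

lemma poly_nz: "6*(real m)^2 - real m - 3 \<noteq> 0"
proof (cases m)
  case 0 thus ?thesis by simp
next
  case (Suc i)
  hence "real m \<ge> 1" by simp
  hence "(real m)^2 \<ge> real m" by (simp add: power2_eq_square)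
  thus ?thesis using \<open>real m \<ge> 1\<close> by linarith
qed

lemma odd_nz: "2*real m - 3 \<noteq> 0" "2*real m - 1 \<noteq> 0"
proof -
  have a: "2*m \<noteq> 3" "2*m \<noteq> 1" by presburger+
  have b: "real (2*m) \<noteq> 3"
  proof
    assume "real (2*m) = 3"
    hence "real (2*m) = real (3::nat)" by simp
    hence "2*m = 3" by (simp only: of_nat_eq_iff)
    with a show False by simp
  qed
  have c: "real (2*m) \<noteq> 1"
  proof
    assume "real (2*m) = 1"
    hence "real (2*m) = real (1::nat)" by simp
    hence "2*m = 1" by (simp only: of_nat_eq_iff)
    with a show False by simp
  qed
  show "2*real m - 3 \<noteq> 0" "2*real m - 1 \<noteq> 0" using b c by simp_all
qed

lemma alg_step:
  fixes x uU u c1 c0 pw :: real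
  assumes h1: "(2*x+2)*(6*x^2-x-3)*uU - (6*x^2+11*x+2)*(2*x-3)*u = 0"
   and h2: "u*((2*x-3)*(2*x-1)*pw) = c0*(6*x^2-x-3)"
   and h3: "c1*(1 + x) = 2*(2*x+1)*c0"
   and n1: "1 + x \<noteq> 0" and n2: "6*x^2-x-3 \<noteq> 0" and n3: "2*x-3 \<noteq> 0"
  shows "uU*((2*(1 + x)-3)*(2*(1 + x)-1)*(4*pw)) = c1*(6*(1 + x)^2-(1 + x)-3)"
  using assms by algebra

lemma U_eq: "U m * ((2*real m-3)*(2*real m-1)*4^m) = real (2*m choose m)*(6*(real m)^2-real m-3)"
proof (induction m)
  case 0 thus ?case by (simp add: U_def Am_def)
next
  case (Suc m)
  have c: "real (2*Suc m choose Suc m) * (real m + 1) = 2*(2*real m + 1) * real (2*m choose m)"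
  proof -
    have "2*Suc m = 2*m+2" by simp
    thus ?thesis using cb3[of m] by simp
  qed
  have c': "real (2*Suc m choose Suc m) * (1 + real m) = 2*(2*real m + 1) * real (2*m choose m)"
    using c by (simp add: add.commute)
  have "U (Suc m)*((2*(1 + real m)-3)*(2*(1 + real m)-1)*(4*4^m)) = real (2*Suc m choose Suc m)*(6*(1 + real m)^2-(1 + real m)-3)"
    by (rule alg_step[OF U_rec Suc.IH c' _ poly_nz odd_nz(1)]) simp
  thus ?case unfolding of_nat_Suc power_Suc .
qed

definition Fm :: "nat \<Rightarrow> nat \<Rightarrow> real" where
  "Fm n k = (-1/4::real)^k * real (n choose k) * real ((1 + 2*k) choose k) * real k"

definition GB :: "nat \<Rightarrow> nat \<Rightarrow> real" where
  "GB n k = -2*((real k)^2-1)*Fm (Suc n) k"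

definition S :: "nat \<Rightarrow> real" where
  "S n = (\<Sum>k=0..n. Fm n k * harm (1+2*k))"

lemma hz_lemma: "real ((1+2*Suc k) choose Suc k)*(real k+2) = 2*(2*real k+3)*real((1+2*k) choose k)"
proof -
  have a: "1+2*Suc k = 2*k+3" by simp
  have b: "Suc k = k+1" by simp
  have c: "1+2*k = Suc (2*k)" by simp
  show ?thesis unfolding a unfolding b c by (rule cb4)
qed

lemma certB_alg:
  fixes n k t b c x y z :: real
  assumes hx: "x*(n+1) = b*(n+1-k)" and hy: "y*(k+1) = b*(n+1-k)" and hz: "z*(k+2) = 2*(2*k+3)*c"
  shows "2*n*(n+2)*(t*b*c*k) - (2*n-1)*(n+1)*(t*x*c*k) = -2*((1+k)^2-1)*(-1/4*t*y*z*(1+k)) - -2*(k^2-1)*(t*b*c*k)"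
  using assms by algebra

lemma termB_alg:
  fixes k T z w i1 i2 :: real
  assumes hz: "z*(k+2) = (2*k+3)*w" and i1: "(2*k+2)*i1 = 1" and i2: "(2*k+3)*i2 = 1"
  shows "- (- 2 * ((1 + k)^2 - 1) * (T * z * (1 + k)) * (i1 + i2)) = T * w * (1 + k - 1) * (4 * (1 + k) + 1)"
  using assms by algebra

lemma certB:
  "2*real n*(real n+2)*Fm (Suc n) k - (2*real n-1)*(real n+1)*Fm n k = GB n (Suc k) - GB n k"
proof -
  have hx: "real (n choose k)*(real n+1) = real(Suc n choose k)*(real n+1-real k)" by (rule bin1)
  have hy: "real (Suc n choose Suc k)*(real k+1) = real(Suc n choose k)*(real n+1-real k)"
    using bin1[of n k] bin2[of n k] by linarith
  have hz: "real ((1+2*Suc k) choose Suc k)*(real k+2) = 2*(2*real k+3)*real((1+2*k) choose k)"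
    by (rule hz_lemma)
  show ?thesis unfolding GB_def Fm_def power_Suc of_nat_Suc by (rule certB_alg[OF hx hy hz])
qed

lemma h_diff: "harm (1+2*Suc k) - harm (1+2*k) = inverse (2*real k+2) + inverse (2*real k + 3 :: real)"
proof -
  have a: "1+2*Suc k = Suc (Suc (1+2*k))" by simp
  have b: "real (Suc (1+2*k)) = 2*real k+2" "real (Suc (Suc (1+2*k))) = 2*real k+3" by simp_all
  show ?thesis unfolding a harm_Suc b by simp
qed

lemma termB: "- (GB n (Suc k) * (harm (1+2*Suc k) - harm (1+2*k))) = Am (Suc n) (Suc k)"
proof -
  have hz: "real ((1+2*Suc k) choose Suc k)*(real k+2) = (2*real k+3)*real(2*Suc k choose Suc k)"
  proof -
    have a: "1+2*Suc k = Suc (2*Suc k)" by simp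
    have "real (Suc (2*Suc k) choose Suc k) * (real (Suc k) + 1) = (2*real (Suc k)+1) * real (2*Suc k choose Suc k)"
      by (rule cb)
    thus ?thesis unfolding a by (simp add: algebra_simps)
  qed
  have i1: "(2*real k+2) * inverse (2*real k+2) = 1" by (rule right_inverse) simp
  have i2: "(2*real k+3) * inverse (2*real k+3) = 1" by (rule right_inverse) simp
  show ?thesis unfolding h_diff GB_def Fm_def Am_def of_nat_Suc by (rule termB_alg[OF hz i1 i2])
qed

lemma S_rec: "2*real n*(real n+2)*S (Suc n) - (2*real n-1)*(real n+1)*S n = U (Suc n) + 1"
proof -
  define h :: "nat \<Rightarrow> real" where "h k = harm (1+2*k)" for k
  have s1: "S n = (\<Sum>k=0..Suc n. Fm n k * h k)"
    unfolding S_def h_def by (simp add: Fm_def)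
  have s2: "S (Suc n) = (\<Sum>k=0..Suc n. Fm (Suc n) k * h k)"
    unfolding S_def h_def ..
  have "2*real n*(real n+2)*S (Suc n) - (2*real n-1)*(real n+1)*S n
      = (\<Sum>k=0..Suc n. (2*real n*(real n+2)*Fm (Suc n) k - (2*real n-1)*(real n+1)*Fm n k) * h k)"
    unfolding s1 s2 sum_distrib_left sum_subtractf[symmetric]
    by (rule sum.cong) (simp_all add: algebra_simps)
  also have "\<dots> = (\<Sum>k=0..Suc n. (GB n (Suc k) * h (Suc k) - GB n k * h k) - GB n (Suc k) * (h (Suc k) - h k))"
    by (rule sum.cong[OF refl], unfold certB, simp add: algebra_simps)
  also have "\<dots> = (\<Sum>k=0..Suc n. GB n (Suc k) * h (Suc k) - GB n k * h k) - (\<Sum>k=0..Suc n. GB n (Suc k) * (h (Suc k) - h k))"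
    by (rule sum_subtractf)
  also have "(\<Sum>k=0..Suc n. GB n (Suc k) * h (Suc k) - GB n k * h k) = GB n (Suc (Suc n)) * h (Suc (Suc n)) - GB n 0 * h 0"
    by (rule sum_Suc_diff[where f = "\<lambda>k. GB n k * h k"]) simp
  also have "\<dots> = 0" by (simp add: GB_def Fm_def)
  also have "(\<Sum>k=0..Suc n. GB n (Suc k) * (h (Suc k) - h k)) = - (\<Sum>k=0..Suc n. Am (Suc n) (Suc k))"
    unfolding sum_negf[symmetric] h_def
    by (rule sum.cong) (simp_all flip: termB)
  also have "(\<Sum>k=0..Suc n. Am (Suc n) (Suc k)) = (\<Sum>j=Suc 0..Suc (Suc n). Am (Suc n) j)"
    by (rule sum.shift_bounds_cl_Suc_ivl[symmetric])
  also have "\<dots> = (\<Sum>j=Suc 0..Suc n. Am (Suc n) j) + Am (Suc n) (Suc (Suc n))"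
    by (rule sum.cl_ivl_Suc[THEN trans]) simp
  also have "Am (Suc n) (Suc (Suc n)) = 0" by (simp add: Am_def)
  also have "(\<Sum>j=Suc 0..Suc n. Am (Suc n) j) = U (Suc n) - Am (Suc n) 0"
    unfolding U_def by (simp add: sum.atLeast_Suc_atMost)
  also have "Am (Suc n) 0 = -1" by (simp add: Am_def)
  finally show ?thesis by simp
qed

lemma stepalg2:
  fixes n x y B B' P S S' U' :: real
  assumes n1: "n \<ge> 1" and P: "P > 0"
   and hS: "S = 3*n/(P*(1-4*n^2))*B*(3*x - 4*y - 16*n/(1-4*n^2) - (2-14*n)/(3*n)) + 1/(1+n)"
   and hrec: "2*n*(n+2)*S' - (2*n-1)*(n+1)*S = U' + 1"
   and hU: "U' * ((2*(1+n)-3)*(2*(1+n)-1)*(2*P)) = (2*B)*(6*(1+n)^2-(1+n)-3)"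
   and hB: "B'*(n+2) = 2*(2*n+3)*B"
  shows "S' = 3*(1+n)/((4*P)*(1-4*(1+n)^2))*B'*(3*(x + inverse(1+n)) - 4*(y + (inverse(2*n+2) + inverse(2*n+3)))
           - 16*(1+n)/(1-4*(1+n)^2) - (2-14*(1+n))/(3*(1+n))) + 1/(1+(1+n))"
proof -
  have p: "n > 0" "1+n > 0" "2+n > 0" "n+2>0" "1+2*n > 0" "2*n+1 > 0" "2*n+3>0" "2*n+2 > 0" "2*n-1 > 0" "1 - 2*n < 0" "3*n > 0"
    using n1 by linarith+
  have q: "n^2 \<ge> 1" "(1+n)^2 \<ge> 1" using n1 by (simp_all add: one_le_power)
  have nz: "n \<noteq> 0" "1+n \<noteq> 0" "2+n \<noteq> 0" "n+2\<noteq>0" "1+2*n \<noteq> 0" "2*n+1 \<noteq> 0" "2*n+3\<noteq>0" "2*n+2 \<noteq> 0" "2*n-1 \<noteq> 0" "1 - 2*n \<noteq> 0" "3*n \<noteq> 0"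
    "P \<noteq> 0" "1-4*n^2 \<noteq> 0" "1-4*(1+n)^2 \<noteq> 0"
    using p P q by linarith+
  have nz2: "2*(1+n)-3 \<noteq> 0" "2*(1+n)-1 \<noteq> 0" "1+(1+n) \<noteq> 0" "3*(1+n) \<noteq> 0"
    using n1 by (simp_all add: algebra_simps)
  have d: "2*n*(n+2) \<noteq> 0" using nz by simp
  have "S' * (2*n*(n+2)) = U'+1+(2*n-1)*(n+1)*S" using hrec by algebra
  hence eS': "S' = (U'+1+(2*n-1)*(n+1)*S)/(2*n*(n+2))"
    using d by (simp add: eq_divide_eq)
  have eU: "U' = (2*B)*(6*(1+n)^2-(1+n)-3) / ((2*(1+n)-3)*(2*(1+n)-1)*(2*P))"
    using hU nz nz2 by (simp add: eq_divide_eq)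
  have eB: "B' = 2*(2*n+3)*B/(n+2)" using hB nz by (simp add: eq_divide_eq)
  show ?thesis unfolding eS' eU eB hS using nz nz2
    by (simp add: divide_simps) (simp add: algebra_simps power2_eq_square)
qed

definition R :: "nat \<Rightarrow> real" where
  "R n = 3 * real n / (2^(1 + 2*n) * (1 - 4 * (real n)^2)) * real ((1 + 2*n) choose n)
           * (3 * harm n - 4 * harm (1 + 2*n) - 16 * real n / (1 - 4 * (real n)^2)
              - (2 - 14 * real n) / (3 * real n))
         + 1 / (1 + real n)"

lemma S_closed: "n \<ge> 1 \<Longrightarrow> S n = R n"
proof (induction n rule: nat_induct_at_least)
  case base
  have h1: "harm (Suc 0) = (1::real)" by (simp add: harm_def)
  have h3: "harm (Suc (Suc (Suc 0))) = (11/6::real)"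
    by (simp only: harm_Suc) (simp add: harm_def)
  have h3': "harm 3 = (11/6::real)" using h3 by (simp add: numeral_3_eq_3)
  show ?case by (simp add: S_def Fm_def R_def h1 h3 h3')
next
  case (Suc m)
  define P :: real where "P = 2^(1+2*m)"
  have Pp: "P > 0" unfolding P_def by simp
  have pw: "(2::real)^(1+2*Suc m) = 4*P" unfolding P_def by (simp add: power_add)
  have pw4: "(4::real)^Suc m = 2*P" unfolding P_def by (simp add: power_add power_mult)
  have hh: "harm (1+2*Suc m) = harm (1+2*m) + (inverse (2*real m+2) + inverse (2*real m+3) :: real)"
    using h_diff[of m] by simp
  have hS: "S m = 3 * real m / (P * (1 - 4 * (real m)^2)) * real ((1 + 2*m) choose m)
           * (3 * harm m - 4 * harm (1 + 2*m) - 16 * real m / (1 - 4 * (real m)^2)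
              - (2 - 14 * real m) / (3 * real m)) + 1 / (1 + real m)"
    using Suc.IH unfolding R_def P_def .
  have cc: "real (2*Suc m choose Suc m) = 2 * real ((1+2*m) choose m)"
  proof -
    have a: "2*Suc m = 2*m+2" by simp
    have b: "Suc m = m+1" by simp
    have c: "1+2*m = Suc (2*m)" by simp
    show ?thesis unfolding a unfolding b c by (rule cb2)
  qed
  have hU: "U (Suc m) * ((2*(1+real m)-3)*(2*(1+real m)-1)*(2*P)) = (2*real ((1+2*m) choose m))*(6*(1+real m)^2-(1+real m)-3)"
    using U_eq[of "Suc m"] unfolding of_nat_Suc pw4 cc .
  have m1: "real m \<ge> 1" using Suc.hyps by simp
  show ?case unfolding R_def hh harm_Suc of_nat_Suc pw
    by (rule stepalg2[OF m1 Pp hS S_rec hU hz_lemma])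
qed

theorem theorem11:
  fixes n :: nat
  assumes "n \<ge> 1"
  shows "(\<Sum>k=0..n. (-1/4::real)^k * real (n choose k) * real ((1 + 2*k) choose k)
            * real k * harm (1 + 2*k))
       = 3 * real n / (2^(1 + 2*n) * (1 - 4 * (real n)^2)) * real ((1 + 2*n) choose n)
           * (3 * harm n - 4 * harm (1 + 2*n) - 16 * real n / (1 - 4 * (real n)^2)
              - (2 - 14 * real n) / (3 * real n))
         + 1 / (1 + real n)"
  using S_closed[OF assms] unfolding S_def Fm_def R_def .

end
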